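(* Let $\mathbb G$ be a finite (possibly non-abelian) group with operation $+$ and $n\ge1$. Consider the function group-add: Alice has $X\in\mathbb G^n$, Bob has $Y\in\mathbb G^n$, Charlie outputs $Z=X+Y$ (component-wise). For every $p_{XY}$ with full support on $\mathbb G^n\times\mathbb G^n$, any secure protocol satisfies \[H(M_{12}),\ H(M_{23}),\ H(M_{31})\ge n\log|\mathbb G|,\] and $\rho(p_{XY},\text{group-add})\ge n\log|\mathbb G|$.
   Context: Setting: Alice (party 1) holds $X$, Bob (party 2) holds $Y$, $(X,Y)\sim p_{XY}$ on finite sets; Charlie (party 3) has no input and outputs $Z$, which should equal $f(X,Y)$ for the deterministic function $f$. In a protocol the parties, each with private randomness, exchange messages over multiple rounds on three pairwise private links, each message a codeword of a prefix-free code determined by previous messages on that link; the protocol terminates with probability 1 and may depend on $p_{XY}$. $M_{12},M_{23},M_{31}$ are the final transcripts on the Alice–Bob, Bob–Charlie, Charlie–Alice links; the view $V_i$ of party $i$ consists of the transcripts on its two links plus its input (Alice, Bob) or output (Charlie). A secure protocol satisfies correctness (Charlie outputs $f(x,y)$ on inputs $x,y$) and privacy (Markov chains $(M_{12},M_{31})-X-(Y,Z)$, $(M_{12},M_{23})-Y-(X,Z)$, $(M_{23},M_{31})-Z-(X,Y)$). $\rho(p_{XY},f)=\inf H(V_1,V_2,V_3|X,Y)$ over all secure protocols for $f$ with input distribution $p_{XY}$. Logs base 2. *)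

theory Defs
  imports "HOL-Probability.Probability"
begin

text \<open>Parties: 1 = Alice (input x), 2 = Bob (input y), 3 = Charlie (no input, output z).  On each link, in each round, the link is either active
  (both endpoints exchange one message in each direction) or silent; whether it is
  active is determined by the previous history of that link (known to both endpoints).
  Private randomness is modelled by behavioural strategies: in each round a party draws
  its outgoing messages from a distribution depending only on its current view.\<close>

type_synonym msg = "bool list"
type_synonym lentry = "(msg \<times> msg) option"
type_synonym lhist = "lentry list"
type_synonym rnd = "lentry \<times> lentry \<times> lentry"   \<comment> \<open>entries on links 12, 23, 31\<close>

text \<open>Orientation of message pairs: link 12 = (Alice to Bob, Bob to Alice);
  link 23 = (Bob to Charlie, Charlie to Bob); link 31 = (Charlie to Alice, Alice to Charlie).\<close>

datatype link = L12 | L23 | L31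

record ('x, 'y, 'z) protocol =
  p_act :: "link \<Rightarrow> lhist \<Rightarrow> bool"
  p_alice :: "'x \<Rightarrow> lhist \<Rightarrow> lhist \<Rightarrow> (msg \<times> msg) pmf"
    \<comment> \<open>view: input, history of link 12, history of link 31; output: (to Bob, to Charlie)\<close>
  p_bob :: "'y \<Rightarrow> lhist \<Rightarrow> lhist \<Rightarrow> (msg \<times> msg) pmf"
    \<comment> \<open>view: input, history of link 12, history of link 23; output: (to Alice, to Charlie)\<close>
  p_charlie :: "lhist \<Rightarrow> lhist \<Rightarrow> (msg \<times> msg) pmf"
    \<comment> \<open>view: history of link 23, history of link 31; output: (to Bob, to Alice)\<close>
  p_out :: "(msg \<times> msg) list \<Rightarrow> (msg \<times> msg) list \<Rightarrow> 'z"

definition h12 :: "rnd list \<Rightarrow> lhist" where "h12 r = map fst r"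
definition h23 :: "rnd list \<Rightarrow> lhist" where "h23 r = map (fst \<circ> snd) r"
definition h31 :: "rnd list \<Rightarrow> lhist" where "h31 r = map (snd \<circ> snd) r"

definition tr :: "lhist \<Rightarrow> (msg \<times> msg) list" where
  "tr h = [the e. e \<leftarrow> h, e \<noteq> None]"

definition M12 :: "rnd list \<Rightarrow> (msg \<times> msg) list" where "M12 r = tr (h12 r)"
definition M23 :: "rnd list \<Rightarrow> (msg \<times> msg) list" where "M23 r = tr (h23 r)"
definition M31 :: "rnd list \<Rightarrow> (msg \<times> msg) list" where "M31 r = tr (h31 r)"

definition round_prob :: "('x, 'y, 'z) protocol \<Rightarrow> 'x \<Rightarrow> 'y \<Rightarrow> rnd list \<Rightarrow> rnd \<Rightarrow> real" where
  "round_prob P x y r e =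
    (case e of (e12, e23, e31) \<Rightarrow>
      if (e12 = None \<longleftrightarrow> \<not> p_act P L12 (h12 r)) \<and> (e23 = None \<longleftrightarrow> \<not> p_act P L23 (h23 r))
         \<and> (e31 = None \<longleftrightarrow> \<not> p_act P L31 (h31 r))
      then measure_pmf.prob (p_alice P x (h12 r) (h31 r))
             {(u, v). (\<forall>p. e12 = Some p \<longrightarrow> u = fst p) \<and> (\<forall>p. e31 = Some p \<longrightarrow> v = snd p)}
         * measure_pmf.prob (p_bob P y (h12 r) (h23 r))
             {(u, v). (\<forall>p. e12 = Some p \<longrightarrow> u = snd p) \<and> (\<forall>p. e23 = Some p \<longrightarrow> v = fst p)}
         * measure_pmf.prob (p_charlie P (h23 r) (h31 r))
             {(u, v). (\<forall>p. e23 = Some p \<longrightarrow> u = snd p) \<and> (\<forall>p. e31 = Some p \<longrightarrow> v = fst p)}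
      else 0)"

definition run_prob :: "('x, 'y, 'z) protocol \<Rightarrow> 'x \<Rightarrow> 'y \<Rightarrow> rnd list \<Rightarrow> real" where
  "run_prob P x y r = (\<Prod>k<length r. round_prob P x y (take k r) (r ! k))"

definition halted :: "('x, 'y, 'z) protocol \<Rightarrow> rnd list \<Rightarrow> bool" where
  "halted P r \<longleftrightarrow> (\<forall>k. \<not> p_act P L12 (h12 r @ replicate k None)
      \<and> \<not> p_act P L23 (h23 r @ replicate k None) \<and> \<not> p_act P L31 (h31 r @ replicate k None))"

definition complete :: "('x, 'y, 'z) protocol \<Rightarrow> rnd list \<Rightarrow> bool" where
  "complete P r \<longleftrightarrow> halted P r \<and> (\<forall>k<length r. \<not> halted P (take k r))"

definition terminates :: "('x \<times> 'y) pmf \<Rightarrow> ('x, 'y, 'z) protocol \<Rightarrow> bool" where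
  "terminates pXY P \<longleftrightarrow> (\<forall>x y. pmf pXY (x, y) > 0 \<longrightarrow>
     (\<integral>\<^sup>+ r. ennreal (if complete P r then run_prob P x y r else 0) \<partial>count_space UNIV) = 1)"

text \<open>Joint distribution of inputs and the complete execution (meaningful when the protocol
  terminates with probability 1).\<close>
definition joint :: "('x \<times> 'y) pmf \<Rightarrow> ('x, 'y, 'z) protocol \<Rightarrow> ('x \<times> 'y \<times> rnd list) pmf" where
  "joint pXY P = embed_pmf (\<lambda>(x, y, r). pmf pXY (x, y) * (if complete P r then run_prob P x y r else 0))"

definition outZ :: "('x, 'y, 'z) protocol \<Rightarrow> rnd list \<Rightarrow> 'z" where
  "outZ P r = p_out P (M23 r) (M31 r)"

definition correct :: "('x \<times> 'y) pmf \<Rightarrow> ('x \<Rightarrow> 'y \<Rightarrow> 'z) \<Rightarrow> ('x, 'y, 'z) protocol \<Rightarrow> bool" where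
  "correct pXY f P \<longleftrightarrow> (\<forall>x y r. pmf pXY (x, y) > 0 \<longrightarrow> complete P r \<longrightarrow> run_prob P x y r > 0
      \<longrightarrow> outZ P r = f x y)"

definition markov_chain :: "('a \<times> 'b \<times> 'c) pmf \<Rightarrow> bool" where
  "markov_chain J \<longleftrightarrow> (\<forall>a b c.
     pmf J (a, b, c) * pmf (map_pmf (\<lambda>(a, b, c). b) J) b
     = pmf (map_pmf (\<lambda>(a, b, c). (a, b)) J) (a, b) * pmf (map_pmf (\<lambda>(a, b, c). (b, c)) J) (b, c))"

definition is_private :: "('x \<times> 'y) pmf \<Rightarrow> ('x, 'y, 'z) protocol \<Rightarrow> bool" where
  "is_private pXY P \<longleftrightarrow>
     markov_chain (map_pmf (\<lambda>(x, y, r). ((M12 r, M31 r), x, (y, outZ P r))) (joint pXY P)) \<and>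
     markov_chain (map_pmf (\<lambda>(x, y, r). ((M12 r, M23 r), y, (x, outZ P r))) (joint pXY P)) \<and>
     markov_chain (map_pmf (\<lambda>(x, y, r). ((M23 r, M31 r), outZ P r, (x, y))) (joint pXY P))"

definition secure :: "('x \<times> 'y) pmf \<Rightarrow> ('x \<Rightarrow> 'y \<Rightarrow> 'z) \<Rightarrow> ('x, 'y, 'z) protocol \<Rightarrow> bool" where
  "secure pXY f P \<longleftrightarrow> terminates pXY P \<and> correct pXY f P \<and> is_private pXY P"

definition entropy2 :: "'a pmf \<Rightarrow> ennreal" where
  "entropy2 p = (\<integral>\<^sup>+ a. ennreal (pmf p a * log 2 (1 / pmf p a)) \<partial>count_space UNIV)"

definition cond_entropy2 :: "('a \<times> 'b) pmf \<Rightarrow> ennreal" where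
  "cond_entropy2 J = (\<integral>\<^sup>+ ab. ennreal (pmf J ab * log 2 (pmf (map_pmf snd J) (snd ab) / pmf J ab))
      \<partial>count_space UNIV)"

definition H_M12 :: "('x \<times> 'y) pmf \<Rightarrow> ('x, 'y, 'z) protocol \<Rightarrow> ennreal" where
  "H_M12 pXY P = entropy2 (map_pmf (\<lambda>(x, y, r). M12 r) (joint pXY P))"
definition H_M23 :: "('x \<times> 'y) pmf \<Rightarrow> ('x, 'y, 'z) protocol \<Rightarrow> ennreal" where
  "H_M23 pXY P = entropy2 (map_pmf (\<lambda>(x, y, r). M23 r) (joint pXY P))"
definition H_M31 :: "('x \<times> 'y) pmf \<Rightarrow> ('x, 'y, 'z) protocol \<Rightarrow> ennreal" where
  "H_M31 pXY P = entropy2 (map_pmf (\<lambda>(x, y, r). M31 r) (joint pXY P))"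

definition views_entropy :: "('x \<times> 'y) pmf \<Rightarrow> ('x, 'y, 'z) protocol \<Rightarrow> ennreal" where
  "views_entropy pXY P = cond_entropy2 (map_pmf (\<lambda>(x, y, r).
      (((x, M12 r, M31 r), (y, M12 r, M23 r), (M23 r, M31 r, outZ P r)), (x, y))) (joint pXY P))"

definition rho :: "('x \<times> 'y) pmf \<Rightarrow> ('x \<Rightarrow> 'y \<Rightarrow> 'z) \<Rightarrow> ennreal" where
  "rho pXY f = (INF P \<in> {P. secure pXY f P}. views_entropy pXY P)"

end

theory Submission
  imports Defs "HOL-Library.Cardinality"
begin


lemma embed_pmf_pmf: "embed_pmf (pmf p) = p"
  using type_definition.Rep_inverse[OF td_pmf_embed_pmf] by blast

lemma pmf_bind_finite:
  fixes M :: "'a::finite pmf"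
  shows "pmf (bind_pmf M f) i = (\<Sum>w\<in>UNIV. pmf (f w) i * pmf M w)"
  unfolding pmf_bind by (rule integral_measure_pmf_real) auto

lemma round_prob_nonneg: "round_prob P x y r e \<ge> 0"
  unfolding round_prob_def by (auto split: prod.splits)

lemma run_prob_nonneg: "run_prob P x y r \<ge> 0"
  unfolding run_prob_def by (auto intro!: prod_nonneg round_prob_nonneg)

definition Kp :: "('x,'y,'z) protocol \<Rightarrow> 'x \<Rightarrow> 'y \<Rightarrow> rnd list pmf" where
  "Kp P x y = embed_pmf (\<lambda>r. if complete P r then run_prob P x y r else 0)"

lemma pmf_Kp:
  assumes "(\<integral>\<^sup>+ r. ennreal (if complete P r then run_prob P x y r else 0) \<partial>count_space UNIV) = 1"
  shows "pmf (Kp P x y) r = (if complete P r then run_prob P x y r else 0)"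
  unfolding Kp_def by (rule pmf_embed_pmf) (auto simp: run_prob_nonneg assms)

lemma set_Kp:
  assumes "(\<integral>\<^sup>+ r. ennreal (if complete P r then run_prob P x y r else 0) \<partial>count_space UNIV) = 1"
  shows "r \<in> set_pmf (Kp P x y) \<longleftrightarrow> complete P r \<and> run_prob P x y r > 0"
  using pmf_Kp[OF assms, of r] run_prob_nonneg[of P x y r]
  by (auto simp: set_pmf_eq')

lemma joint_bind:
  fixes pXY :: "('x::finite \<times> 'y::finite) pmf"
  assumes "terminates pXY P"
  shows "joint pXY P = bind_pmf pXY (\<lambda>(x,y). map_pmf (\<lambda>r. (x,y,r)) (Kp P x y))"
proof -
  have "(\<lambda>(x, y, r). pmf pXY (x, y) * (if complete P r then run_prob P x y r else 0))
        = pmf (bind_pmf pXY (\<lambda>(x,y). map_pmf (\<lambda>r. (x,y,r)) (Kp P x y)))"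
  proof
    fix t :: "'x \<times> 'y \<times> rnd list"
    obtain x y r where t: "t = (x,y,r)" by (cases t) auto
    have "pmf (bind_pmf pXY (\<lambda>(x,y). map_pmf (\<lambda>r. (x,y,r)) (Kp P x y))) t
       = (\<Sum>w\<in>UNIV. pmf ((\<lambda>(x,y). map_pmf (\<lambda>r. (x,y,r)) (Kp P x y)) w) t * pmf pXY w)"
      by (rule pmf_bind_finite)
    also have "\<dots> = (\<Sum>w\<in>{(x,y)}. pmf ((\<lambda>(x,y). map_pmf (\<lambda>r. (x,y,r)) (Kp P x y)) w) t * pmf pXY w)"
    proof (rule sum.mono_neutral_right)
      show "\<forall>w\<in>UNIV - {(x, y)}. pmf ((\<lambda>(x,y). map_pmf (\<lambda>r. (x,y,r)) (Kp P x y)) w) t * pmf pXY w = 0"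
        using t by (auto intro!: pmf_map_outside)
    qed auto
    also have "\<dots> = pmf (Kp P x y) r * pmf pXY (x,y)"
      using t pmf_map_inj'[of "\<lambda>r. (x,y,r)" "Kp P x y" r] by (simp add: inj_def)
    also have "\<dots> = pmf pXY (x, y) * (if complete P r then run_prob P x y r else 0)"
    proof (cases "pmf pXY (x,y) > 0")
      case True
      then show ?thesis using assms by (simp add: terminates_def pmf_Kp)
    next
      case False
      then have "pmf pXY (x,y) = 0" using pmf_nonneg[of pXY "(x,y)"] by linarith
      then show ?thesis by simp
    qed
    finally show "(\<lambda>(x, y, r). pmf pXY (x, y) * (if complete P r then run_prob P x y r else 0)) t
        = pmf (bind_pmf pXY (\<lambda>(x,y). map_pmf (\<lambda>r. (x,y,r)) (Kp P x y))) t" using t by simp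
  qed
  then show ?thesis unfolding joint_def by (simp add: embed_pmf_pmf)
qed




lemma markov_law:
  fixes pU :: "'u::finite pmf" and K :: "'u \<Rightarrow> 'r pmf" and V :: "'r \<Rightarrow> 'a"
    and s :: "'u \<Rightarrow> 'b" and t :: "'u \<Rightarrow> 'c"
  assumes full: "set_pmf pU = UNIV" and inj: "inj (\<lambda>u. (s u, t u))"
    and mc: "markov_chain (bind_pmf pU (\<lambda>u. map_pmf (\<lambda>r. (V r, s u, t u)) (K u)))"
  shows "\<exists>F. \<forall>u a. pmf (map_pmf V (K u)) a = F (s u) a"
proof -
  define J where "J = bind_pmf pU (\<lambda>u. map_pmf (\<lambda>r. (V r, s u, t u)) (K u))"
  define L where "L w = map_pmf V (K w)" for w
  have J2: "J = bind_pmf pU (\<lambda>w. map_pmf (\<lambda>v. (v, s w, t w)) (L w))"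
    unfolding J_def L_def by (simp add: map_pmf_comp o_def)
  have Jb: "map_pmf (\<lambda>(a, b, c). b) J = map_pmf s pU"
    unfolding J2 map_bind_pmf by (simp add: map_pmf_comp map_pmf_def[of s])
  have Jbc: "map_pmf (\<lambda>(a, b, c). (b, c)) J = map_pmf (\<lambda>w. (s w, t w)) pU"
    unfolding J2 map_bind_pmf by (simp add: map_pmf_comp map_pmf_def[of "\<lambda>w. (s w, t w)"])
  have pJ: "pmf J (a, s u, t u) = pmf (L u) a * pmf pU u" for a u
  proof -
    have "pmf J (a, s u, t u) = (\<Sum>w\<in>UNIV. pmf (map_pmf (\<lambda>v. (v, s w, t w)) (L w)) (a, s u, t u) * pmf pU w)"
      unfolding J2 by (rule pmf_bind_finite)
    also have "\<dots> = (\<Sum>w\<in>{u}. pmf (map_pmf (\<lambda>v. (v, s w, t w)) (L w)) (a, s u, t u) * pmf pU w)"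
    proof (rule sum.mono_neutral_right)
      show "\<forall>w\<in>UNIV - {u}. pmf (map_pmf (\<lambda>v. (v, s w, t w)) (L w)) (a, s u, t u) * pmf pU w = 0"
      proof
        fix w assume "w \<in> UNIV - {u}"
        then have "(s w, t w) \<noteq> (s u, t u)" using inj by (auto simp: inj_def)
        then show "pmf (map_pmf (\<lambda>v. (v, s w, t w)) (L w)) (a, s u, t u) * pmf pU w = 0"
          by (subst pmf_map_outside) auto
      qed
    qed auto
    also have "\<dots> = pmf (L u) a * pmf pU u"
      using pmf_map_inj'[of "\<lambda>v. (v, s u, t u)" "L u" a] by (simp add: inj_def)
    finally show ?thesis .
  qed
  have pos: "pmf pU u > 0" for u using full by (metis UNIV_I pmf_positive)
  have Jbpos: "pmf (map_pmf (\<lambda>(a, b, c). b) J) (s u) > 0" for u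
  proof -
    have "s u \<in> set_pmf (map_pmf s pU)" using full by simp
    then show ?thesis unfolding Jb by (simp add: set_pmf_eq')
  qed
  have Jbcv: "pmf (map_pmf (\<lambda>(a, b, c). (b, c)) J) (s u, t u) = pmf pU u" for u
    unfolding Jbc using pmf_map_inj'[OF inj, of pU u] by simp
  define F where "F b a = pmf (map_pmf (\<lambda>(a, b, c). (a, b)) J) (a, b) / pmf (map_pmf (\<lambda>(a, b, c). b) J) b" for b a
  have "pmf (L u) a = F (s u) a" for u a
  proof -
    have "pmf J (a, s u, t u) * pmf (map_pmf (\<lambda>(a, b, c). b) J) (s u)
        = pmf (map_pmf (\<lambda>(a, b, c). (a, b)) J) (a, s u) * pmf (map_pmf (\<lambda>(a, b, c). (b, c)) J) (s u, t u)"
      using mc unfolding J_def[symmetric] markov_chain_def by blast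
    then have "pmf (L u) a * pmf pU u * pmf (map_pmf (\<lambda>(a, b, c). b) J) (s u)
        = pmf (map_pmf (\<lambda>(a, b, c). (a, b)) J) (a, s u) * pmf pU u"
      by (simp only: pJ Jbcv)
    then show ?thesis using pos[of u] Jbpos[of u] unfolding F_def
      by (simp add: field_simps)
  qed
  then show ?thesis unfolding L_def by blast
qed

lemma markov_law':
  fixes pU :: "'u::finite pmf" and K :: "'u \<Rightarrow> 'r pmf" and V :: "'r \<Rightarrow> 'a"
    and s :: "'u \<Rightarrow> 'b" and t :: "'u \<Rightarrow> 'c"
  assumes full: "set_pmf pU = UNIV" and inj: "inj (\<lambda>u. (s u, t u))"
    and mc: "markov_chain (bind_pmf pU (\<lambda>u. map_pmf (\<lambda>r. (V r, s u, t u)) (K u)))"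
    and "s u = s u'"
  shows "map_pmf V (K u) = map_pmf V (K u')"
  using markov_law[OF full inj mc] assms(4) by (auto intro: pmf_eqI)




lemma tr_Nil[simp]: "tr [] = []" by (simp add: tr_def)
lemma tr_Cons_None[simp]: "tr (None # h) = tr h" by (simp add: tr_def)
lemma tr_Cons_Some[simp]: "tr (Some a # h) = a # tr h" by (simp add: tr_def)
lemma tr_append: "tr (h @ g) = tr h @ tr g" by (simp add: tr_def)

lemma tr_prefix:
  fixes h h' :: lhist
  assumes A: "\<forall>k<length h. (h!k = None) = (\<not> act (take k h))"
    and A': "\<forall>k<length h'. (h'!k = None) = (\<not> act (take k h'))"
    and T: "tr h = tr h'"
  shows "n \<le> length h \<Longrightarrow> n \<le> length h' \<Longrightarrow> take n h = take n h'"
proof (induction n)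
  case 0
  then show ?case by simp
next
  case (Suc n)
  then have IH: "take n h = take n h'" and n: "n < length h" "n < length h'" by auto
  have "h!n = h'!n"
  proof (cases "h!n")
    case None
    then have "\<not> act (take n h)" using A n by auto
    then have "h'!n = None" using A' n IH by auto
    then show ?thesis using None by simp
  next
    case (Some a)
    then have "act (take n h)" using A n by auto
    then have "h'!n \<noteq> None" using A' n IH by auto
    then obtain b where b: "h'!n = Some b" by auto
    have "tr h = tr (take n h) @ a # tr (drop (Suc n) h)"
      using Some n by (metis Cons_nth_drop_Suc append_take_drop_id tr_Cons_Some tr_append)
    moreover have "tr h' = tr (take n h') @ b # tr (drop (Suc n) h')"
      using b n by (metis Cons_nth_drop_Suc append_take_drop_id tr_Cons_Some tr_append)
    ultimately have "a = b" using T IH by simp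
    then show ?thesis using Some b by simp
  qed
  then show ?case using IH n by (simp add: take_Suc_conv_app_nth)
qed

lemma run_pos_round:
  assumes "run_prob P x y r > 0" "k < length r"
  shows "round_prob P x y (take k r) (r!k) > 0"
proof (rule ccontr)
  assume "\<not> round_prob P x y (take k r) (r!k) > 0"
  then have "round_prob P x y (take k r) (r!k) = 0"
    using round_prob_nonneg[of P x y "take k r" "r!k"] by linarith
  then have "run_prob P x y r = 0"
    unfolding run_prob_def using assms(2) by (intro prod_zero) auto
  then show False using assms(1) by simp
qed

lemma round_pos_act:
  assumes "round_prob P x y h e > 0"
  shows "(fst e = None \<longleftrightarrow> \<not> p_act P L12 (h12 h)) \<and> (fst (snd e) = None \<longleftrightarrow> \<not> p_act P L23 (h23 h))
     \<and> (snd (snd e) = None \<longleftrightarrow> \<not> p_act P L31 (h31 h))"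
proof -
  obtain a b c where e: "e = (a,b,c)" by (cases e) auto
  define cond where "cond = ((a = None \<longleftrightarrow> \<not> p_act P L12 (h12 h)) \<and> (b = None \<longleftrightarrow> \<not> p_act P L23 (h23 h))
     \<and> (c = None \<longleftrightarrow> \<not> p_act P L31 (h31 h)))"
  have "\<not> cond \<Longrightarrow> round_prob P x y h e = 0"
    unfolding round_prob_def e cond_def by (simp only: prod.case if_False)
  then have cond using assms by force
  then show ?thesis unfolding cond_def e by simp
qed

lemma hist_props:
  assumes "run_prob P x y r > 0"
  shows "\<forall>k<length (h12 r). (h12 r!k = None) = (\<not> p_act P L12 (take k (h12 r)))"
    "\<forall>k<length (h23 r). (h23 r!k = None) = (\<not> p_act P L23 (take k (h23 r)))"
    "\<forall>k<length (h31 r). (h31 r!k = None) = (\<not> p_act P L31 (take k (h31 r)))"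
proof -
  have *: "(fst (r!k) = None \<longleftrightarrow> \<not> p_act P L12 (h12 (take k r))) \<and> (fst (snd (r!k)) = None \<longleftrightarrow> \<not> p_act P L23 (h23 (take k r)))
     \<and> (snd (snd (r!k)) = None \<longleftrightarrow> \<not> p_act P L31 (h31 (take k r)))" if "k < length r" for k
    by (rule round_pos_act[OF run_pos_round[OF assms that]])
  have e: "h12 (take k r) = take k (h12 r)" "h23 (take k r) = take k (h23 r)" "h31 (take k r) = take k (h31 r)" for k
    unfolding h12_def h23_def h31_def by (simp_all only: take_map)
  have l: "length (h12 r) = length r" "length (h23 r) = length r" "length (h31 r) = length r"
    unfolding h12_def h23_def h31_def by simp_all
  have n: "k < length r \<Longrightarrow> h12 r ! k = fst (r!k)" "k < length r \<Longrightarrow> h23 r ! k = fst (snd (r!k))"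
     "k < length r \<Longrightarrow> h31 r ! k = snd (snd (r!k))" for k
    unfolding h12_def h23_def h31_def by simp_all
  show "\<forall>k<length (h12 r). (h12 r!k = None) = (\<not> p_act P L12 (take k (h12 r)))"
    using * e n l by metis
  show "\<forall>k<length (h23 r). (h23 r!k = None) = (\<not> p_act P L23 (take k (h23 r)))"
    using * e n l by metis
  show "\<forall>k<length (h31 r). (h31 r!k = None) = (\<not> p_act P L31 (take k (h31 r)))"
    using * e n l by metis
qed

lemma transcripts_inj:
  assumes c: "complete P r" "complete P r'"
    and p: "run_prob P x y r > 0" "run_prob P x' y' r' > 0"
    and m: "M12 r = M12 r'" "M23 r = M23 r'" "M31 r = M31 r'"
  shows "r = r'"
proof -
  define n where "n = min (length r) (length r')"
  have a: "take n (h12 r) = take n (h12 r')"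
    by (rule tr_prefix[OF hist_props(1)[OF p(1)] hist_props(1)[OF p(2)]])
       (use m in \<open>auto simp: M12_def n_def h12_def\<close>)
  have b: "take n (h23 r) = take n (h23 r')"
    by (rule tr_prefix[OF hist_props(2)[OF p(1)] hist_props(2)[OF p(2)]])
       (use m in \<open>auto simp: M23_def n_def h23_def\<close>)
  have d: "take n (h31 r) = take n (h31 r')"
    by (rule tr_prefix[OF hist_props(3)[OF p(1)] hist_props(3)[OF p(2)]])
       (use m in \<open>auto simp: M31_def n_def h31_def\<close>)
  have e: "take n r = take n r'"
  proof (rule nth_equalityI)
    show "length (take n r) = length (take n r')" by (simp add: n_def)
  next
    fix i assume i: "i < length (take n r)"
    have "fst (r!i) = fst (r'!i)" using arg_cong[OF a, of "\<lambda>l. l!i"] i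
      by (simp add: h12_def n_def)
    moreover have "fst (snd (r!i)) = fst (snd (r'!i))" using arg_cong[OF b, of "\<lambda>l. l!i"] i
      by (simp add: h23_def n_def)
    moreover have "snd (snd (r!i)) = snd (snd (r'!i))" using arg_cong[OF d, of "\<lambda>l. l!i"] i
      by (simp add: h31_def n_def)
    ultimately show "take n r ! i = take n r' ! i" using i by (simp add: prod_eq_iff)
  qed
  have "length r = length r'"
  proof (rule ccontr)
    assume ne: "length r \<noteq> length r'"
    show False
    proof (cases "length r < length r'")
      case True
      then have "take (length r) r' = r" using e by (simp add: n_def)
      then show False using c True unfolding complete_def by metis
    next
      case False
      then have "length r' < length r" using ne by simp
      then have "take (length r') r = r'" using e by (simp add: n_def)
      then show False using c \<open>length r' < length r\<close> unfolding complete_def by metis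
    qed
  qed
  then show ?thesis using e by (simp add: n_def)
qed

lemma cross:
  assumes "run_prob P x y r > 0" "run_prob P x' y' r > 0"
  shows "run_prob P x y' r > 0"
proof -
  have "round_prob P x y' (take k r) (r!k) > 0" if k: "k < length r" for k
  proof -
    have 1: "round_prob P x y (take k r) (r!k) > 0" using run_pos_round[OF assms(1) k] .
    have 2: "round_prob P x' y' (take k r) (r!k) > 0" using run_pos_round[OF assms(2) k] .
    obtain e12 e23 e31 where e: "r!k = (e12, e23, e31)" by (cases "r!k") auto
    let ?h = "take k r"
    define A where "A x = measure_pmf.prob (p_alice P x (h12 ?h) (h31 ?h))
             {(u, v). (\<forall>p. e12 = Some p \<longrightarrow> u = fst p) \<and> (\<forall>p. e31 = Some p \<longrightarrow> v = snd p)}" for x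
    define B where "B y = measure_pmf.prob (p_bob P y (h12 ?h) (h23 ?h))
             {(u, v). (\<forall>p. e12 = Some p \<longrightarrow> u = snd p) \<and> (\<forall>p. e23 = Some p \<longrightarrow> v = fst p)}" for y
    define C where "C = measure_pmf.prob (p_charlie P (h23 ?h) (h31 ?h))
             {(u, v). (\<forall>p. e23 = Some p \<longrightarrow> u = snd p) \<and> (\<forall>p. e31 = Some p \<longrightarrow> v = fst p)}"
    define cond where "cond = ((e12 = None \<longleftrightarrow> \<not> p_act P L12 (h12 ?h)) \<and> (e23 = None \<longleftrightarrow> \<not> p_act P L23 (h23 ?h))
         \<and> (e31 = None \<longleftrightarrow> \<not> p_act P L31 (h31 ?h)))"
    have rp: "round_prob P x y ?h (r!k) = (if cond then A x * B y * C else 0)" for x y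
      unfolding round_prob_def e A_def B_def C_def cond_def by (simp only: prod.case)
    have nnA: "A x \<ge> 0" for x unfolding A_def by auto
    have nnB: "B y \<ge> 0" for y unfolding B_def by auto
    have nnC: "C \<ge> 0" unfolding C_def by auto
    from 1 have c: cond and p1: "A x * B y * C > 0" unfolding rp by (auto split: if_splits)
    from 2 have p2: "A x' * B y' * C > 0" unfolding rp by (auto split: if_splits)
    have "A x \<noteq> 0" "C \<noteq> 0" using p1 by auto
    then have "A x > 0" "C > 0" using nnA[of x] nnC by linarith+
    moreover have "B y' \<noteq> 0" using p2 by auto
    then have "B y' > 0" using nnB[of y'] by linarith
    ultimately have "A x * B y' * C > 0" by simp
    then show ?thesis unfolding rp using c by simp
  qed
  then show ?thesis unfolding run_prob_def by (auto intro!: prod_pos)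
qed




lemma count_bound:
  fixes K :: "'i::finite \<Rightarrow> 'r pmf" and V :: "'r \<Rightarrow> 'v"
  assumes same: "\<And>i j. map_pmf V (K i) = map_pmf V (K j)"
    and sep: "\<And>i j r r'. r \<in> set_pmf (K i) \<Longrightarrow> r \<in> S \<Longrightarrow> r' \<in> set_pmf (K j) \<Longrightarrow> r' \<in> S
               \<Longrightarrow> V r = V r' \<Longrightarrow> i = j"
  shows "(\<Sum>i\<in>UNIV. measure_pmf.prob (K i) S) \<le> 1"
proof -
  fix i0 :: 'i
  define G where "G = map_pmf V (K i0)"
  define C where "C i = V ` (set_pmf (K i) \<inter> S)" for i
  have le: "measure_pmf.prob (K i) S \<le> measure_pmf.prob G (C i)" for i
  proof -
    have "measure_pmf.prob (K i) S = measure_pmf.prob (K i) (S \<inter> set_pmf (K i))"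
      by (simp add: measure_Int_set_pmf)
    also have "\<dots> \<le> measure_pmf.prob (K i) (V -` C i)"
      by (rule measure_pmf.finite_measure_mono) (auto simp: C_def)
    also have "\<dots> = measure_pmf.prob G (C i)"
      unfolding G_def same[of i0 i] by simp
    finally show ?thesis .
  qed
  have disj: "disjoint_family C"
    unfolding disjoint_family_on_def C_def using sep by blast
  have "(\<Sum>i\<in>UNIV. measure_pmf.prob (K i) S) \<le> (\<Sum>i\<in>UNIV. measure_pmf.prob G (C i))"
    by (rule sum_mono) (rule le)
  also have "\<dots> = measure_pmf.prob G (\<Union>i\<in>UNIV. C i)"
    by (rule measure_pmf.finite_measure_finite_Union[symmetric]) (use disj in auto)
  also have "\<dots> \<le> 1" by simp
  finally show ?thesis .
qed

lemma ent_bound: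
  fixes p :: "'a pmf" and g :: "'a \<Rightarrow> real" and N :: real
  assumes N: "N \<ge> 1" and g: "\<And>a. pmf p a > 0 \<Longrightarrow> g a \<ge> N"
  shows "(\<integral>\<^sup>+a. ennreal (pmf p a * log 2 (g a)) \<partial>count_space UNIV) \<ge> ennreal (log 2 N)"
proof -
  have L: "log 2 N \<ge> 0" using N by simp
  have one: "(\<integral>\<^sup>+ a. ennreal (pmf p a) \<partial>count_space UNIV) = 1"
    by (simp add: nn_integral_pmf measure_pmf.emeasure_space_1[simplified])
  have "ennreal (log 2 N) = (\<integral>\<^sup>+ a. ennreal (pmf p a) \<partial>count_space UNIV) * ennreal (log 2 N)"
    by (simp add: one)
  also have "\<dots> = (\<integral>\<^sup>+ a. ennreal (pmf p a) * ennreal (log 2 N) \<partial>count_space UNIV)"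
    by (rule nn_integral_multc[symmetric]) simp
  also have "\<dots> \<le> (\<integral>\<^sup>+a. ennreal (pmf p a * log 2 (g a)) \<partial>count_space UNIV)"
  proof (rule nn_integral_mono)
    fix a
    show "ennreal (pmf p a) * ennreal (log 2 N) \<le> ennreal (pmf p a * log 2 (g a))"
    proof (cases "pmf p a > 0")
      case True
      then have "g a \<ge> N" by (rule g)
      then have "log 2 N \<le> log 2 (g a)" using N by simp
      then have "pmf p a * log 2 N \<le> pmf p a * log 2 (g a)" using True by simp
      then show ?thesis using L by (simp add: ennreal_mult[symmetric] ennreal_leI)
    next
      case False
      then have "pmf p a = 0" using pmf_nonneg[of p a] by linarith
      then show ?thesis by simp
    qed
  qed
  finally show ?thesis .
qed




lemma map_joint:
  "map_pmf g (bind_pmf pXY (\<lambda>(x,y). map_pmf (\<lambda>r. (x,y,r)) (K x y)))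
   = bind_pmf pXY (\<lambda>u. map_pmf (\<lambda>r. g (fst u, snd u, r)) (K (fst u) (snd u)))"
  unfolding map_bind_pmf by (rule bind_pmf_cong) (auto simp: map_pmf_comp)

lemma law_from_mc:
  fixes pXY :: "('x::finite \<times> 'y::finite) pmf" and K :: "'x \<Rightarrow> 'y \<Rightarrow> 'r pmf"
  assumes full: "set_pmf pXY = UNIV" and inj: "inj (\<lambda>u. (s u, t u))"
    and eq: "\<And>x y r. r \<in> set_pmf (K x y) \<Longrightarrow> g (x,y,r) = (V r, s (x,y), t (x,y))"
    and mc: "markov_chain (map_pmf g (bind_pmf pXY (\<lambda>(x,y). map_pmf (\<lambda>r. (x,y,r)) (K x y))))"
    and st: "s (x,y) = s (x',y')"
  shows "map_pmf V (K x y) = map_pmf V (K x' y')"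
proof -
  have "map_pmf g (bind_pmf pXY (\<lambda>(x,y). map_pmf (\<lambda>r. (x,y,r)) (K x y)))
      = bind_pmf pXY (\<lambda>u. map_pmf (\<lambda>r. (V r, s u, t u)) (K (fst u) (snd u)))"
    unfolding map_joint by (intro bind_pmf_cong refl map_pmf_cong) (auto simp: eq)
  then have mc': "markov_chain (bind_pmf pXY (\<lambda>u. map_pmf (\<lambda>r. (V r, s u, t u)) ((\<lambda>u. K (fst u) (snd u)) u)))"
    using mc by simp
  show ?thesis using markov_law'[OF full inj mc' st] by simp
qed

lemma pmf_bind_tag:
  fixes pU :: "'u::finite pmf"
  shows "pmf (bind_pmf pU (\<lambda>u. map_pmf (\<lambda>r. (W u r, u)) (K u))) (w, u) = pmf pU u * pmf (map_pmf (W u) (K u)) w"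
proof -
  have "pmf (bind_pmf pU (\<lambda>u. map_pmf (\<lambda>r. (W u r, u)) (K u))) (w, u)
      = (\<Sum>v\<in>UNIV. pmf (map_pmf (\<lambda>r. (W v r, v)) (K v)) (w, u) * pmf pU v)"
    by (rule pmf_bind_finite)
  also have "\<dots> = (\<Sum>v\<in>{u}. pmf (map_pmf (\<lambda>r. (W v r, v)) (K v)) (w, u) * pmf pU v)"
    by (rule sum.mono_neutral_right) (auto intro!: pmf_map_outside)
  also have "\<dots> = pmf pU u * pmf (map_pmf (W u) (K u)) w"
    using pmf_map_inj'[of "\<lambda>v. (v, u)" "map_pmf (W u) (K u)" w]
    by (simp add: inj_def map_pmf_comp)
  finally show ?thesis .
qed

lemma snd_bind_tag:
  "map_pmf snd (bind_pmf pU (\<lambda>u. map_pmf (\<lambda>r. (W u r, u)) (K u))) = pU"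
  unfolding map_bind_pmf by (simp add: map_pmf_comp bind_return_pmf')

lemma map_eq_comp:
  "map_pmf V A = map_pmf V B \<Longrightarrow> map_pmf (\<lambda>r. h (V r)) A = map_pmf (\<lambda>r. h (V r)) B"
  by (metis (no_types) map_pmf_comp)

theorem theorem13:
  fixes pXY :: "(('n::finite \<Rightarrow> 'g::{group_add, finite}) \<times> ('n \<Rightarrow> 'g)) pmf"
  assumes "set_pmf pXY = UNIV"
  shows "(\<forall>P :: ('n \<Rightarrow> 'g, 'n \<Rightarrow> 'g, 'n \<Rightarrow> 'g) protocol.
            secure pXY (\<lambda>x y. \<lambda>i. x i + y i) P \<longrightarrow>
              H_M12 pXY P \<ge> ennreal (real CARD('n) * log 2 (real CARD('g))) \<and>
              H_M23 pXY P \<ge> ennreal (real CARD('n) * log 2 (real CARD('g))) \<and>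
              H_M31 pXY P \<ge> ennreal (real CARD('n) * log 2 (real CARD('g))))
         \<and> rho pXY (\<lambda>x y. \<lambda>i. x i + y i) \<ge> ennreal (real CARD('n) * log 2 (real CARD('g)))"
proof -
  note full = assms
  define N :: real where "N = real CARD('n \<Rightarrow> 'g)"
  have "0 < CARD('n \<Rightarrow> 'g)" by (simp add: card_gt_0_iff)
  then have N1: "N \<ge> 1" unfolding N_def by linarith
  have logN: "log 2 N = real CARD('n) * log 2 (real CARD('g))"
    unfolding N_def card_fun by (simp add: log_nat_power)
  have main: "ennreal (log 2 N) \<le> H_M12 pXY P \<and> ennreal (log 2 N) \<le> H_M23 pXY P \<and>
      ennreal (log 2 N) \<le> H_M31 pXY P \<and> ennreal (log 2 N) \<le> views_entropy pXY P"
    if sec: "secure pXY (\<lambda>x y. \<lambda>i. x i + y i) P" for P :: "('n \<Rightarrow> 'g, 'n \<Rightarrow> 'g, 'n \<Rightarrow> 'g) protocol"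
  proof -
    define f :: "('n \<Rightarrow> 'g) \<Rightarrow> ('n \<Rightarrow> 'g) \<Rightarrow> ('n \<Rightarrow> 'g)" where "f = (\<lambda>x y. \<lambda>i. x i + y i)"
    have trm: "terminates pXY P" and corr: "correct pXY f P" and priv: "is_private pXY P"
      using sec unfolding secure_def f_def by auto
    have pos: "pmf pXY (x, y) > 0" for x y using full by (metis UNIV_I pmf_positive)
    define K where "K = Kp P"
    have T: "(\<integral>\<^sup>+ r. ennreal (if complete P r then run_prob P x y r else 0) \<partial>count_space UNIV) = 1" for x y
      using trm pos unfolding terminates_def by blast
    have setK: "r \<in> set_pmf (K x y) \<longleftrightarrow> complete P r \<and> run_prob P x y r > 0" for x y r
      unfolding K_def by (rule set_Kp[OF T])
    have outK: "outZ P r = f x y" if "r \<in> set_pmf (K x y)" for x y r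
      using that corr pos unfolding setK correct_def by blast
    have J: "joint pXY P = bind_pmf pXY (\<lambda>(x,y). map_pmf (\<lambda>r. (x,y,r)) (K x y))"
      unfolding K_def by (rule joint_bind[OF trm])
    have mcA: "markov_chain (map_pmf (\<lambda>(x, y, r). ((M12 r, M31 r), x, (y, outZ P r))) (joint pXY P))"
     and mcB: "markov_chain (map_pmf (\<lambda>(x, y, r). ((M12 r, M23 r), y, (x, outZ P r))) (joint pXY P))"
     and mcC: "markov_chain (map_pmf (\<lambda>(x, y, r). ((M23 r, M31 r), outZ P r, (x, y))) (joint pXY P))"
      using priv unfolding is_private_def by auto
    have lawA: "map_pmf (\<lambda>r. (M12 r, M31 r)) (K x y) = map_pmf (\<lambda>r. (M12 r, M31 r)) (K x y')" for x y y'
      by (rule law_from_mc[OF full, where s=fst and t="\<lambda>u. (snd u, f (fst u) (snd u))"])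
         (use mcA in \<open>auto simp: J inj_def outK\<close>)
    have lawB: "map_pmf (\<lambda>r. (M12 r, M23 r)) (K x y) = map_pmf (\<lambda>r. (M12 r, M23 r)) (K x' y)" for x x' y
      by (rule law_from_mc[OF full, where s=snd and t="\<lambda>u. (fst u, f (fst u) (snd u))"])
         (use mcB in \<open>auto simp: J inj_def outK\<close>)
    have lawC: "map_pmf (\<lambda>r. (M23 r, M31 r)) (K x y) = map_pmf (\<lambda>r. (M23 r, M31 r)) (K x' y')"
      if "f x y = f x' y'" for x y x' y'
      by (rule law_from_mc[OF full, where s="\<lambda>u. f (fst u) (snd u)" and t="\<lambda>u. u"])
         (use mcC that in \<open>auto simp: J inj_def outK\<close>)
    have Q12: "map_pmf M12 (K x y) = map_pmf M12 (K x' y')" for x y x' y'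
      using map_eq_comp[OF lawA[of x y y'], of fst] map_eq_comp[OF lawB[of x y' x'], of fst] by simp
    have Q23: "map_pmf M23 (K x y) = map_pmf M23 (K x' y')" for x y x' y'
    proof -
      define x'' where "x'' = (\<lambda>i. (x' i + y' i) - y i)"
      have "f x'' y = f x' y'" unfolding f_def x''_def by simp
      then show ?thesis
        using map_eq_comp[OF lawB[of x y x''], of snd] map_eq_comp[OF lawC[of x'' y x' y'], of fst] by simp
    qed
    have Q31: "map_pmf M31 (K x y) = map_pmf M31 (K x' y')" for x y x' y'
    proof -
      define y'' where "y'' = (\<lambda>i. - x i + (x' i + y' i))"
      have "f x y'' = f x' y'" unfolding f_def y''_def by (simp add: add.assoc[symmetric])
      then show ?thesis
        using map_eq_comp[OF lawA[of x y y''], of snd] map_eq_comp[OF lawC[of x y'' x' y'], of snd] by simp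
    qed
    have pr: "measure_pmf.prob M {r. V r = m} = pmf (map_pmf V M) m" for M :: "rnd list pmf" and V :: "rnd list \<Rightarrow> (msg \<times> msg) list" and m
      by (simp add: pmf_map vimage_def)
    have inj_tr: "r = r'" if "r \<in> set_pmf (K x y)" "r' \<in> set_pmf (K x' y')"
      "M12 r = M12 r'" "M23 r = M23 r'" "M31 r = M31 r'" for r r' x y x' y'
      using that unfolding setK by (intro transcripts_inj) auto
    have B12: "N * pmf (map_pmf M12 (K x0 y0)) m \<le> 1" for x0 y0 m
    proof -
      have "(\<Sum>x\<in>UNIV. measure_pmf.prob (K x (\<lambda>i. - x i)) {r. M12 r = m}) \<le> 1"
      proof (rule count_bound[where V="\<lambda>r. (M23 r, M31 r)"])
        show "map_pmf (\<lambda>r. (M23 r, M31 r)) (K i (\<lambda>ia. - i ia)) = map_pmf (\<lambda>r. (M23 r, M31 r)) (K j (\<lambda>i. - j i))" for i j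
          by (rule lawC) (simp add: f_def)
      next
        fix i j r r'
        assume a: "r \<in> set_pmf (K i (\<lambda>ia. - i ia))" "r \<in> {r. M12 r = m}"
          "r' \<in> set_pmf (K j (\<lambda>i. - j i))" "r' \<in> {r. M12 r = m}" "(M23 r, M31 r) = (M23 r', M31 r')"
        then have rr: "r = r'" using inj_tr by auto
        have p1: "run_prob P i (\<lambda>ia. - i ia) r > 0" and c1: "complete P r" using a(1) setK by blast+
        have p2: "run_prob P j (\<lambda>ia. - j ia) r > 0" using a(3) rr setK by blast
        have "run_prob P i (\<lambda>ia. - j ia) r > 0" by (rule cross[OF p1 p2])
        then have "r \<in> set_pmf (K i (\<lambda>ia. - j ia))" using c1 setK by blast
        then have o1: "outZ P r = f i (\<lambda>ia. - j ia)" by (rule outK)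
        have o2: "outZ P r = f j (\<lambda>ia. - j ia)" using a(3) rr outK by blast
        have "f i (\<lambda>ia. - j ia) = f j (\<lambda>ia. - j ia)" using o1 o2 by simp
        then have "i k + - j k = j k + - j k" for k unfolding f_def by (metis (no_types))
        then show "i = j" by (simp add: fun_eq_iff)
      qed
      moreover have "measure_pmf.prob (K x (\<lambda>i. - x i)) {r. M12 r = m} = pmf (map_pmf M12 (K x0 y0)) m" for x
        using pr[of "K x (\<lambda>i. - x i)" M12 m] Q12[of x "\<lambda>i. - x i" x0 y0] by simp
      ultimately show ?thesis unfolding N_def by simp
    qed
    have B23: "N * pmf (map_pmf M23 (K x0 y0)) m \<le> 1" for x0 y0 m
    proof -
      have "(\<Sum>y\<in>UNIV. measure_pmf.prob (K x0 y) {r. M23 r = m}) \<le> 1"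
      proof (rule count_bound[where V="\<lambda>r. (M12 r, M31 r)"])
        show "map_pmf (\<lambda>r. (M12 r, M31 r)) (K x0 i) = map_pmf (\<lambda>r. (M12 r, M31 r)) (K x0 j)" for i j
          by (rule lawA)
      next
        fix i j r r'
        assume a: "r \<in> set_pmf (K x0 i)" "r \<in> {r. M23 r = m}"
          "r' \<in> set_pmf (K x0 j)" "r' \<in> {r. M23 r = m}" "(M12 r, M31 r) = (M12 r', M31 r')"
        then have rr: "r = r'" using inj_tr by auto
        have o1: "outZ P r = f x0 i" using a(1) outK by blast
        have o2: "outZ P r = f x0 j" using a(3) rr outK by blast
        have "f x0 i = f x0 j" using o1 o2 by simp
        then have "x0 k + i k = x0 k + j k" for k unfolding f_def by (metis (no_types))
        then show "i = j" by (simp add: fun_eq_iff)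
      qed
      moreover have "measure_pmf.prob (K x0 y) {r. M23 r = m} = pmf (map_pmf M23 (K x0 y0)) m" for y
        using pr[of "K x0 y" M23 m] Q23[of x0 y x0 y0] by simp
      ultimately show ?thesis unfolding N_def by simp
    qed
    have B31: "N * pmf (map_pmf M31 (K x0 y0)) m \<le> 1" for x0 y0 m
    proof -
      have "(\<Sum>x\<in>UNIV. measure_pmf.prob (K x y0) {r. M31 r = m}) \<le> 1"
      proof (rule count_bound[where V="\<lambda>r. (M12 r, M23 r)"])
        show "map_pmf (\<lambda>r. (M12 r, M23 r)) (K i y0) = map_pmf (\<lambda>r. (M12 r, M23 r)) (K j y0)" for i j
          by (rule lawB)
      next
        fix i j r r'
        assume a: "r \<in> set_pmf (K i y0)" "r \<in> {r. M31 r = m}"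
          "r' \<in> set_pmf (K j y0)" "r' \<in> {r. M31 r = m}" "(M12 r, M23 r) = (M12 r', M23 r')"
        then have rr: "r = r'" using inj_tr by auto
        have o1: "outZ P r = f i y0" using a(1) outK by blast
        have o2: "outZ P r = f j y0" using a(3) rr outK by blast
        have "f i y0 = f j y0" using o1 o2 by simp
        then have "i k + y0 k = j k + y0 k" for k unfolding f_def by (metis (no_types))
        then show "i = j" by (simp add: fun_eq_iff)
      qed
      moreover have "measure_pmf.prob (K x y0) {r. M31 r = m} = pmf (map_pmf M31 (K x0 y0)) m" for x
        using pr[of "K x y0" M31 m] Q31[of x y0 x0 y0] by simp
      ultimately show ?thesis unfolding N_def by simp
    qed
    fix x0 :: "'n \<Rightarrow> 'g" and y0 :: "'n \<Rightarrow> 'g"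
    have HB: "ennreal (log 2 N) \<le> entropy2 Q" if "\<And>m. N * pmf Q m \<le> 1" for Q :: "(msg \<times> msg) list pmf"
      unfolding entropy2_def
    proof (rule ent_bound[OF N1])
      fix a assume "pmf Q a > 0"
      then show "N \<le> 1 / pmf Q a" using that[of a] by (simp add: le_divide_eq)
    qed
    have H12: "map_pmf (\<lambda>(x, y, r). M12 r) (joint pXY P) = map_pmf M12 (K x0 y0)"
      unfolding J map_joint
    proof -
      have "map_pmf (\<lambda>r. (\<lambda>(x, y, r). M12 r) (fst u, snd u, r)) (K (fst u) (snd u)) = map_pmf M12 (K x0 y0)" for u
        by (simp only: prod.case) (rule Q12)
      then show "bind_pmf pXY (\<lambda>u. map_pmf (\<lambda>r. (\<lambda>(x, y, r). M12 r) (fst u, snd u, r)) (K (fst u) (snd u))) = map_pmf M12 (K x0 y0)"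
        by simp
    qed
    have H23: "map_pmf (\<lambda>(x, y, r). M23 r) (joint pXY P) = map_pmf M23 (K x0 y0)"
      unfolding J map_joint
    proof -
      have "map_pmf (\<lambda>r. (\<lambda>(x, y, r). M23 r) (fst u, snd u, r)) (K (fst u) (snd u)) = map_pmf M23 (K x0 y0)" for u
        by (simp only: prod.case) (rule Q23)
      then show "bind_pmf pXY (\<lambda>u. map_pmf (\<lambda>r. (\<lambda>(x, y, r). M23 r) (fst u, snd u, r)) (K (fst u) (snd u))) = map_pmf M23 (K x0 y0)"
        by simp
    qed
    have H31: "map_pmf (\<lambda>(x, y, r). M31 r) (joint pXY P) = map_pmf M31 (K x0 y0)"
      unfolding J map_joint
    proof -
      have "map_pmf (\<lambda>r. (\<lambda>(x, y, r). M31 r) (fst u, snd u, r)) (K (fst u) (snd u)) = map_pmf M31 (K x0 y0)" for u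
        by (simp only: prod.case) (rule Q31)
      then show "bind_pmf pXY (\<lambda>u. map_pmf (\<lambda>r. (\<lambda>(x, y, r). M31 r) (fst u, snd u, r)) (K (fst u) (snd u))) = map_pmf M31 (K x0 y0)"
        by simp
    qed
    have e12: "ennreal (log 2 N) \<le> H_M12 pXY P" unfolding H_M12_def H12 by (rule HB[OF B12])
    have e23: "ennreal (log 2 N) \<le> H_M23 pXY P" unfolding H_M23_def H23 by (rule HB[OF B23])
    have e31: "ennreal (log 2 N) \<le> H_M31 pXY P" unfolding H_M31_def H31 by (rule HB[OF B31])
    define W where "W u r = ((fst u, M12 r, M31 r), (snd u, M12 r, M23 r), (M23 r, M31 r, outZ P r))" for u :: "('n \<Rightarrow> 'g) \<times> ('n \<Rightarrow> 'g)" and r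
    define JV where "JV = bind_pmf pXY (\<lambda>u. map_pmf (\<lambda>r. (W u r, u)) (K (fst u) (snd u)))"
    have JVeq: "map_pmf (\<lambda>(x, y, r). (((x, M12 r, M31 r), (y, M12 r, M23 r), (M23 r, M31 r, outZ P r)), (x, y)))
        (joint pXY P) = JV"
      unfolding J map_joint JV_def W_def by (intro bind_pmf_cong refl map_pmf_cong) auto
    have sndJV: "map_pmf snd JV = pXY" unfolding JV_def by (rule snd_bind_tag)
    have ev: "ennreal (log 2 N) \<le> views_entropy pXY P"
      unfolding views_entropy_def JVeq cond_entropy2_def sndJV
    proof (rule ent_bound[OF N1])
      fix ab assume ab: "pmf JV ab > 0"
      obtain w u where wu: "ab = (w, u)" by (cases ab) auto
      have pJ: "pmf JV (w, u) = pmf pXY u * pmf (map_pmf (W u) (K (fst u) (snd u))) w"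
        unfolding JV_def by (rule pmf_bind_tag)
      have "pmf (map_pmf (W u) (K (fst u) (snd u))) w
          = measure_pmf.prob (K (fst u) (snd u)) (W u -` {w})" by (simp add: pmf_map)
      also have "\<dots> \<le> measure_pmf.prob (K (fst u) (snd u)) (M12 -` {fst (snd (fst w))})"
        by (rule measure_pmf.finite_measure_mono) (auto simp: W_def)
      also have "\<dots> = pmf (map_pmf M12 (K (fst u) (snd u))) (fst (snd (fst w)))" by (simp add: pmf_map)
      finally have le: "pmf (map_pmf (W u) (K (fst u) (snd u))) w \<le> pmf (map_pmf M12 (K (fst u) (snd u))) (fst (snd (fst w)))" .
      have "N * pmf JV (w, u) \<le> pmf pXY u"
      proof -
        have "N * pmf JV (w, u) = pmf pXY u * (N * pmf (map_pmf (W u) (K (fst u) (snd u))) w)"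
          unfolding pJ by simp
        also have "\<dots> \<le> pmf pXY u * (N * pmf (map_pmf M12 (K (fst u) (snd u))) (fst (snd (fst w))))"
          using le N1 by (intro mult_left_mono) auto
        also have "\<dots> \<le> pmf pXY u * 1"
          using B12 by (intro mult_left_mono) auto
        finally show ?thesis by simp
      qed
      then show "N \<le> pmf pXY (snd ab) / pmf JV ab" using ab unfolding wu by (simp add: le_divide_eq)
    qed
    show ?thesis using e12 e23 e31 ev by blast
  qed
  show ?thesis unfolding logN[symmetric] rho_def
    using main by (auto intro!: INF_greatest)
qed


end
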